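(* Let $\mathbb D=\{z\in\mathbb C:|z|<1\}$ and let $\mathcal P$ be the set of holomorphic functions $p$ on $\mathbb D$ with $\operatorname{Re} p(z)>0$ for all $z\in\mathbb D$ (no normalization $p(0)=1$ is imposed). For $p\in\mathcal P$ and $0<r<1$ set \[ I_p(r):=\int_0^{2\pi}\left|\frac{z p'(z)}{p(z)}\right|^2\,d\theta,\qquad z=re^{i\theta}. \] Let $\Phi:(0,1)\to(0,\infty)$ satisfy $\Phi(r)=o\bigl((1-r)^{-2}\bigr)$ as $r\to1^-$. Then there exists $p_\Phi\in\mathcal P$ such that \[ \limsup_{r\to1^-}\frac{I_{p_\Phi}(r)}{\Phi(r)}=+\infty, \] i.e. $I_{p_\Phi}(r)\neq O(\Phi(r))$ as $r\to1^-$. *)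

theory Defs
  imports "HOL-Complex_Analysis.Complex_Analysis" "HOL-Library.Landau_Symbols"
begin

definition carath_class :: "(complex \<Rightarrow> complex) set" where
  "carath_class = {p. p holomorphic_on ball 0 1 \<and> (\<forall>z\<in>ball 0 1. Re (p z) > 0)}"

definition I_int :: "(complex \<Rightarrow> complex) \<Rightarrow> real \<Rightarrow> real" where
  "I_int p r = integral {0..2*pi}
     (\<lambda>\<theta>. (let z = complex_of_real r * exp (\<i> * complex_of_real \<theta>)
            in (cmod (z * deriv p z / p z))\<^sup>2))"

end

theory Submission
  imports Defs
begin


lemma cos_int_integral:
  fixes m :: int
  shows "((\<lambda>\<theta>. cos (of_int m * \<theta>)) has_integral (if m = 0 then 2*pi else 0)) {0..2*pi}"
proof (cases "m = 0")
  case True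
  then show ?thesis using has_integral_const_real[of "1::real" 0 "2*pi"] by simp
next
  case False
  have d: "((\<lambda>\<theta>. sin (of_int m * \<theta>) / of_int m) has_vector_derivative cos (of_int m * x)) (at x within {0..2*pi})" for x
    using False
    by (auto intro!: derivative_eq_intros simp: has_real_derivative_iff_has_vector_derivative[symmetric])
  have "sin (of_int m * (2*pi)) = 0"
    by (subst sin_zero_iff_int2) (rule exI[of _ "2*m"], simp)
  with fundamental_theorem_of_calculus[of 0 "2*pi", OF _ d] False show ?thesis by simp
qed

lemma series_cos_integral:
  fixes a :: "nat \<Rightarrow> real" and m :: "nat \<Rightarrow> int"
  assumes sa: "summable (\<lambda>k. \<bar>a k\<bar>)"
  shows "(\<lambda>\<theta>. \<Sum>k. a k * cos (of_int (m k) * \<theta>)) integrable_on {0..2*pi}"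
    and "integral {0..2*pi} (\<lambda>\<theta>. \<Sum>k. a k * cos (of_int (m k) * \<theta>))
           = (\<Sum>k. a k * (if m k = 0 then 2*pi else 0))"
proof -
  define f where "f N \<theta> = (\<Sum>k<N. a k * cos (of_int (m k) * \<theta>))" for N \<theta>
  have fi: "(f N has_integral (\<Sum>k<N. a k * (if m k = 0 then 2*pi else 0))) {0..2*pi}" for N
    unfolding f_def
    by (intro has_integral_sum finite_lessThan has_integral_mult_right cos_int_integral)
  have sc: "summable (\<lambda>k. a k * cos (of_int (m k) * \<theta>))" for \<theta>
    by (rule summable_comparison_test'[OF sa, of 0]) (auto simp: abs_mult intro!: mult_left_le)
  have le: "norm (f N \<theta>) \<le> (\<Sum>k. \<bar>a k\<bar>)" for N \<theta>
  proof -
    have "norm (f N \<theta>) \<le> (\<Sum>k<N. \<bar>a k * cos (of_int (m k) * \<theta>)\<bar>)"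
      unfolding f_def real_norm_def by (rule sum_abs)
    also have "\<dots> \<le> (\<Sum>k<N. \<bar>a k\<bar>)"
      by (intro sum_mono) (auto simp: abs_mult intro!: mult_left_le)
    also have "\<dots> \<le> (\<Sum>k. \<bar>a k\<bar>)"
      by (intro sum_le_suminf sa) auto
    finally show ?thesis .
  qed
  have conv: "(\<lambda>N. f N \<theta>) \<longlonglongrightarrow> (\<Sum>k. a k * cos (of_int (m k) * \<theta>))" for \<theta>
    unfolding f_def by (rule summable_LIMSEQ[OF sc])
  note dc = dominated_convergence[of f "{0..2*pi}" "\<lambda>_. \<Sum>k. \<bar>a k\<bar>", OF _ _ le conv]
  show "(\<lambda>\<theta>. \<Sum>k. a k * cos (of_int (m k) * \<theta>)) integrable_on {0..2*pi}"
    using dc fi by blast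
  have s2: "summable (\<lambda>k. a k * (if m k = 0 then 2*pi else 0))"
    by (rule summable_comparison_test'[of "\<lambda>k. \<bar>a k\<bar> * (2*pi)" 0])
       (auto intro!: summable_mult2 sa simp: abs_mult)
  have "(\<lambda>N. integral {0..2*pi} (f N)) \<longlonglongrightarrow> integral {0..2*pi} (\<lambda>\<theta>. \<Sum>k. a k * cos (of_int (m k) * \<theta>))"
    using dc fi by blast
  moreover have "(\<lambda>N. integral {0..2*pi} (f N)) \<longlonglongrightarrow> (\<Sum>k. a k * (if m k = 0 then 2*pi else 0))"
  proof -
    have "integral {0..2*pi} (f N) = (\<Sum>k<N. a k * (if m k = 0 then 2*pi else 0))" for N
      using fi by (rule integral_unique)
    then show ?thesis using summable_LIMSEQ[OF s2] by presburger
  qed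
  ultimately show "integral {0..2*pi} (\<lambda>\<theta>. \<Sum>k. a k * cos (of_int (m k) * \<theta>))
           = (\<Sum>k. a k * (if m k = 0 then 2*pi else 0))" by (rule LIMSEQ_unique)
qed

lemma sq_lower:
  fixes w u :: complex and b :: real
  assumes "cmod u = 1"
  shows "2 * b * Re (w * cnj u) - b\<^sup>2 \<le> (cmod w)\<^sup>2"
proof -
  have u: "(Re u)\<^sup>2 + (Im u)\<^sup>2 = 1" using assms by (simp add: cmod_power2[symmetric])
  have "0 \<le> (Re w - b*Re u)\<^sup>2 + (Im w - b*Im u)\<^sup>2" by simp
  also have "\<dots> = (Re w)\<^sup>2 + (Im w)\<^sup>2 - 2 * b * (Re w * Re u + Im w * Im u) + b\<^sup>2 * ((Re u)\<^sup>2 + (Im u)\<^sup>2)"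
    by (simp add: power2_eq_square algebra_simps)
  finally show ?thesis using u by (simp add: cmod_power2)
qed

lemma limsup_infty:
  fixes f :: "real \<Rightarrow> ereal"
  assumes "\<And>M b. b < 1 \<Longrightarrow> \<exists>r. b < r \<and> r < 1 \<and> ereal M \<le> f r"
  shows "Limsup (at_left (1::real)) f = \<infinity>"
  unfolding Limsup_def
proof (rule INF_eqI[where x="\<infinity>"])
  fix P assume "P \<in> {P. eventually P (at_left (1::real))}"
  then obtain b where b: "b < 1" "\<forall>y>b. y < 1 \<longrightarrow> P y"
    using eventually_at_left[of 0 1 P] by auto
  have "(SUP x\<in>{x. P x}. f x) = top"
    unfolding SUP_eq_top_iff
  proof (intro allI impI)
    fix x :: ereal assume "x < top"
    then obtain M where "x < ereal M"
      by (cases x) (auto, metis gt_ex)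
    from assms[OF b(1), of M] obtain r where "b < r" "r < 1" "ereal M \<le> f r" by auto
    then show "\<exists>i\<in>{x. P x}. x < f i" using b \<open>x < ereal M\<close> by (auto intro: less_le_trans)
  qed
  then show "\<infinity> \<le> (SUP x\<in>{x. P x}. f x)" by (metis top_ereal_def order_refl)
qed auto

lemma main_part:
  fixes \<Phi> :: "real \<Rightarrow> real"
  assumes pos: "\<And>r. 0 < r \<Longrightarrow> r < 1 \<Longrightarrow> \<Phi> r > 0"
    and small: "\<Phi> \<in> o[at_left 1](\<lambda>r. 1 / (1 - r)\<^sup>2)"
  shows "\<exists>p\<in>carath_class.
           Limsup (at_left 1) (\<lambda>r. ereal (I_int p r / \<Phi> r)) = \<infinity>"
proof -
  define c :: "nat \<Rightarrow> real" where "c k = (1/2)^Suc k" for k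
  define \<delta> where "\<delta> k = (c k)\<^sup>2 / (k+1)" for k
  have cpos: "c k > 0" for k by (simp add: c_def)
  have dpos: "\<delta> k > 0" for k using cpos[of k] by (simp add: \<delta>_def)
  have "\<forall>k. \<exists>B<1. \<forall>y>B. y < 1 \<longrightarrow> \<bar>\<Phi> y\<bar> \<le> \<delta> k * \<bar>1 / (1 - y)\<^sup>2\<bar>"
  proof
    fix k
    have "eventually (\<lambda>y. norm (\<Phi> y) \<le> \<delta> k * norm (1 / (1 - y)\<^sup>2)) (at_left (1::real))"
      using landau_o.smallD[OF small dpos[of k]] .
    then show "\<exists>B<1. \<forall>y>B. y < 1 \<longrightarrow> \<bar>\<Phi> y\<bar> \<le> \<delta> k * \<bar>1 / (1 - y)\<^sup>2\<bar>"
      by (subst (asm) eventually_at_left[of "0::real"]) (auto simp only: real_norm_def)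
  qed
  then obtain B where B: "\<And>k. B k < 1" "\<And>k y. B k < y \<Longrightarrow> y < 1 \<Longrightarrow> \<bar>\<Phi> y\<bar> \<le> \<delta> k * \<bar>1 / (1 - y)\<^sup>2\<bar>"
    by metis
  define N where "N k = nat \<lceil>1 / (1 - B k)\<rceil>" for k
  define n where "n k = (\<Sum>i\<le>k. N i + 1)" for k
  have n_Suc: "n (Suc k) = n k + N (Suc k) + 1" for k by (simp add: n_def)
  have n_mono: "strict_mono n" by (rule strict_monoI_Suc) (simp add: n_Suc)
  have n_ge: "n k \<ge> N k + 1" for k by (cases k) (auto simp: n_def)
  have n_ge2: "n k \<ge> k + 1" for k by (induction k) (auto simp: n_Suc n_def)
  have npos: "0 < real (n k)" for k using n_ge2[of k] by auto
  have n_B: "1 / real (n k) < 1 - B k" for k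
  proof -
    have "1 / (1 - B k) \<le> real (N k)" unfolding N_def by linarith
    also have "\<dots> < real (n k)" using n_ge[of k] by linarith
    finally have "1 / (1 - B k) < real (n k)" .
    then show ?thesis using B(1)[of k] npos[of k] by (simp add: field_simps)
  qed
  define f where "f k z = complex_of_real (c k) * z ^ n k" for k z
  define f' where "f' k z = complex_of_real (c k) * of_nat (n k) * z ^ (n k - 1)" for k z
  have csum: "c sums 1" unfolding c_def by (rule power_half_series)
  have "\<exists>g g'. \<forall>x \<in> ball 0 1. ((\<lambda>k. f k x) sums g x) \<and> ((\<lambda>k. f' k x) sums g' x) \<and> (g has_field_derivative g' x) (at x)"
  proof (rule series_and_derivative_comparison_complex)
    show "(f k has_field_derivative f' k x) (at x)" for k x
      unfolding f_def f'_def by (auto intro!: derivative_eq_intros)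
    fix x :: complex assume "x \<in> ball 0 1"
    show "\<exists>d h. 0 < d \<and> summable h \<and> range h \<subseteq> \<real>\<^sub>\<ge>\<^sub>0 \<and> (\<forall>\<^sub>F n in sequentially. \<forall>y\<in>ball x d \<inter> ball 0 1. cmod(f n y) \<le> cmod (h n))"
    proof (intro exI conjI)
      show "summable (\<lambda>k. complex_of_real (c k))" using csum by (simp add: sums_summable)
      show "range (\<lambda>k. complex_of_real (c k)) \<subseteq> \<real>\<^sub>\<ge>\<^sub>0" using cpos by (auto simp: less_imp_le)
      show "\<forall>\<^sub>F k in sequentially. \<forall>y\<in>ball x 1 \<inter> ball 0 1. cmod(f k y) \<le> cmod (complex_of_real (c k))"
        using cpos by (intro always_eventually) (auto simp: f_def norm_mult norm_power less_imp_le intro!: mult_left_le power_le_one)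
    qed simp
  qed simp
  then obtain G G' where GG: "\<And>x. x \<in> ball 0 1 \<Longrightarrow> ((\<lambda>k. f k x) sums G x) \<and> ((\<lambda>k. f' k x) sums G' x) \<and> (G has_field_derivative G' x) (at x)"
    by metis
  define p where "p z = exp (G z)" for z
  have pder: "(p has_field_derivative p z * G' z) (at z)" if "z \<in> ball 0 1" for z
    unfolding p_def using GG[OF that] by (auto intro!: derivative_eq_intros)
  have Gbound: "cmod (G z) \<le> 1" if "z \<in> ball 0 1" for z
  proof -
    have "G z = (\<Sum>k. f k z)" using GG[OF that] by (simp add: sums_iff)
    also have "cmod \<dots> \<le> (\<Sum>k. c k)"
      by (rule norm_suminf_le) (use that cpos csum in \<open>auto simp: f_def norm_mult norm_power sums_iff less_imp_le intro!: mult_left_le power_le_one\<close>)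
    finally show ?thesis using csum by (simp add: sums_iff)
  qed
  have p_class: "p \<in> carath_class"
    unfolding carath_class_def
  proof safe
    show "p holomorphic_on ball 0 1"
      using pder by (subst holomorphic_on_open) blast+
    fix z :: complex assume z: "z \<in> ball 0 1"
    have "\<bar>Im (G z)\<bar> \<le> 1" using Gbound[OF z] abs_Im_le_cmod order_trans by blast
    then have "cos (Im (G z)) > 0" using pi_gt3 by (intro cos_gt_zero_pi) auto
    then show "Re (p z) > 0" by (simp add: p_def Re_exp)
  qed
  have key: "B j < 1 - 1 / (4 * real (n j)) \<and> pi * (j+1) / 16 \<le> I_int p (1 - 1 / (4 * real (n j))) / \<Phi> (1 - 1 / (4 * real (n j)))" for j
  proof -
    define r where "r = 1 - 1 / (4 * real (n j))"
    have n1: "real (n j) \<ge> 1" using n_ge2[of j] by linarith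
    have r0: "0 < r" "r < 1" using n1 by (auto simp: r_def field_simps)
    have rB: "B j < r" using n_B[of j] n1 by (simp add: r_def field_simps)
    define a where "a k = c k * real (n k) * r ^ n k" for k
    define zz where "zz \<theta> = complex_of_real r * exp (\<i> * complex_of_real \<theta>)" for \<theta>
    have zz_ball: "zz \<theta> \<in> ball 0 1" for \<theta> using r0 by (simp add: zz_def norm_mult)
    have zz_cis: "zz \<theta> = complex_of_real r * cis \<theta>" for \<theta> by (simp add: zz_def cis_conv_exp)
    have pnz: "p z \<noteq> 0" for z by (simp add: p_def)
    have integrand: "(let z = zz \<theta> in (cmod (z * deriv p z / p z))\<^sup>2) = (cmod (zz \<theta> * G' (zz \<theta>)))\<^sup>2" for \<theta>
      using DERIV_imp_deriv[OF pder[OF zz_ball[of \<theta>]]] pnz[of "zz \<theta>"] by (simp add: Let_def)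
    have Hsums: "(\<lambda>k. complex_of_real (a k) * cis (real (n k) * \<theta>)) sums (zz \<theta> * G' (zz \<theta>))" for \<theta>
    proof -
      have "(\<lambda>k. zz \<theta> * f' k (zz \<theta>)) sums (zz \<theta> * G' (zz \<theta>))"
        using GG[OF zz_ball[of \<theta>]] by (intro sums_mult) auto
      moreover have "zz \<theta> * f' k (zz \<theta>) = complex_of_real (a k) * cis (real (n k) * \<theta>)" for k
      proof -
        have "n k = Suc (n k - 1)" using n_ge2[of k] by simp
        then have "zz \<theta> * zz \<theta> ^ (n k - 1) = zz \<theta> ^ n k" by (metis power_Suc)
        moreover have dm: "cis (real (n k) * \<theta>) = cis \<theta> ^ n k" by (rule Complex.DeMoivre[symmetric])
        ultimately show ?thesis
          by (simp only: dm) (simp add: f'_def a_def zz_cis power_mult_distrib mult_ac)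
      qed
      ultimately show ?thesis by simp
    qed
    have a0: "a k \<ge> 0" for k using cpos[of k] r0 by (simp add: a_def less_imp_le)
    have asum: "summable (\<lambda>k. \<bar>a k\<bar>)"
    proof -
      have "(\<lambda>k. complex_of_real (a k)) sums (zz 0 * G' (zz 0))"
        using Hsums[of 0] by simp
      then have "summable a" by (metis sums_summable summable_complex_of_real)
      then show ?thesis using a0 by simp
    qed
    define m where "m k = int (n k) - int (n j)" for k
    define S where "S \<theta> = (\<Sum>k. a k * cos (of_int (m k) * \<theta>))" for \<theta>
    have ReS: "Re (zz \<theta> * G' (zz \<theta>) * cnj (cis (real (n j) * \<theta>))) = S \<theta>" for \<theta>
    proof -
      have "(\<lambda>k. Re (complex_of_real (a k) * cis (real (n k) * \<theta>) * cnj (cis (real (n j) * \<theta>))))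
              sums Re (zz \<theta> * G' (zz \<theta>) * cnj (cis (real (n j) * \<theta>)))"
        by (intro sums_Re sums_mult2 Hsums)
      moreover have "Re (complex_of_real (a k) * cis (real (n k) * \<theta>) * cnj (cis (real (n j) * \<theta>)))
          = a k * cos (of_int (m k) * \<theta>)" for k
        by (simp add: cis_cnj cis_mult m_def algebra_simps)
      ultimately show ?thesis unfolding S_def by (simp add: sums_iff)
    qed
    have Sint: "(S has_integral (2 * pi * a j)) {0..2*pi}"
    proof -
      have "(\<lambda>k. a k * (if m k = 0 then 2*pi else 0)) = (\<lambda>k. if k = j then 2 * pi * a k else 0)"
        using strict_mono_eq[OF n_mono] by (auto simp: m_def fun_eq_iff)
      then have "(\<Sum>k. a k * (if m k = 0 then 2*pi else 0)) = 2 * pi * a j"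
        using sums_single[of j "\<lambda>k. 2 * pi * a k"] by (simp add: sums_iff)
      moreover have Si: "S integrable_on {0..2*pi}"
        using series_cos_integral(1)[OF asum, of m] unfolding S_def[abs_def] .
      moreover have "integral {0..2*pi} S = (\<Sum>k. a k * (if m k = 0 then 2*pi else 0))"
        using series_cos_integral(2)[OF asum, of m] unfolding S_def[abs_def] .
      ultimately show ?thesis using integrable_integral[OF Si] by simp
    qed
    define F where "F \<theta> = (let z = zz \<theta> in (cmod (z * deriv p z / p z))\<^sup>2)" for \<theta>
    have IF: "I_int p r = integral {0..2*pi} F"
      unfolding I_int_def F_def zz_def ..
    have Fcont: "continuous_on {0..2*pi} F"
    proof -
      have hp: "p holomorphic_on ball 0 1" using p_class by (simp add: carath_class_def)
      have "(\<lambda>z. z * deriv p z / p z) holomorphic_on ball 0 1"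
        using pnz by (intro holomorphic_intros hp) auto
      then have Qc: "continuous_on (ball 0 1) (\<lambda>z. z * deriv p z / p z)"
        by (rule holomorphic_on_imp_continuous_on)
      have zc: "continuous_on {0..2*pi} zz" unfolding zz_def by (intro continuous_intros)
      have "continuous_on {0..2*pi} (\<lambda>\<theta>. zz \<theta> * deriv p (zz \<theta>) / p (zz \<theta>))"
        by (rule continuous_on_compose2[OF Qc zc]) (use zz_ball in auto)
      then show ?thesis unfolding F_def Let_def by (intro continuous_on_power continuous_on_norm)
    qed
    have Fint: "(F has_integral I_int p r) {0..2*pi}"
      unfolding IF by (rule integrable_integral[OF integrable_continuous_interval[OF Fcont]])
    have low_int: "((\<lambda>\<theta>. 2 * a j * S \<theta> - (a j)\<^sup>2) has_integral (2 * a j * (2 * pi * a j) - 2 * pi * (a j)\<^sup>2)) {0..2*pi}"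
    proof -
      have "((\<lambda>\<theta>. (a j)\<^sup>2) has_integral 2 * pi * (a j)\<^sup>2) {0..2*pi}"
        using has_integral_const_real[of "(a j)\<^sup>2" 0 "2*pi"] by (simp add: mult_ac)
      then show ?thesis by (intro has_integral_diff has_integral_mult_right Sint)
    qed
    have "2 * a j * (2 * pi * a j) - 2 * pi * (a j)\<^sup>2 \<le> I_int p r"
    proof (rule has_integral_le[OF low_int Fint])
      fix \<theta> assume "\<theta> \<in> {0..2*pi}"
      have "2 * a j * Re (zz \<theta> * G' (zz \<theta>) * cnj (cis (real (n j) * \<theta>))) - (a j)\<^sup>2 \<le> (cmod (zz \<theta> * G' (zz \<theta>)))\<^sup>2"
        by (rule sq_lower) simp
      then show "2 * a j * S \<theta> - (a j)\<^sup>2 \<le> F \<theta>"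
        using ReS[of \<theta>] integrand[of \<theta>] by (simp add: F_def)
    qed
    then have Ilow: "2 * pi * (a j)\<^sup>2 \<le> I_int p r" by (simp add: power2_eq_square)
    have rpow: "r ^ n j \<ge> 3/4"
    proof -
      have "1 + real (n j) * (- 1 / (4 * real (n j))) \<le> (1 + (- 1 / (4 * real (n j)))) ^ n j"
        by (rule Bernoulli_inequality) (use n1 in \<open>simp add: field_simps\<close>)
      then show ?thesis using n1 by (simp add: r_def)
    qed
    define X where "X = real (n j)"
    define C where "C = c j"
    have Xp: "X > 0" using n1 by (simp add: X_def)
    have Phip: "\<Phi> r > 0" using pos r0 by auto
    have omr: "1 - r = 1 / (4 * X)" by (simp add: r_def X_def)
    have "\<bar>\<Phi> r\<bar> \<le> \<delta> j * \<bar>1 / (1 - r)\<^sup>2\<bar>" using B(2)[OF rB r0(2)] .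
    then have Phi_le: "\<Phi> r \<le> C\<^sup>2 / (j+1) * (16 * X\<^sup>2)"
      using Phip Xp by (simp add: omr \<delta>_def C_def power2_eq_square field_simps)
    have "(3/4)\<^sup>2 \<le> (r ^ n j)\<^sup>2" by (rule power_mono[OF rpow]) simp
    then have "2 * pi * (C * X)\<^sup>2 * (3/4)\<^sup>2 \<le> 2 * pi * (C * X)\<^sup>2 * (r ^ n j)\<^sup>2"
      by (intro mult_left_mono) auto
    also have "\<dots> = 2 * pi * (a j)\<^sup>2" by (simp add: a_def C_def X_def power_mult_distrib)
    also have "\<dots> \<le> I_int p r" by (rule Ilow)
    finally have I_ge: "2 * pi * (C * X)\<^sup>2 * (3/4)\<^sup>2 \<le> I_int p r" .
    have "pi * (j+1) / 16 * \<Phi> r \<le> pi * (j+1) / 16 * (C\<^sup>2 / (j+1) * (16 * X\<^sup>2))"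
      by (rule mult_left_mono[OF Phi_le]) simp
    also have "\<dots> = pi * (C * X)\<^sup>2" by (simp add: power_mult_distrib field_simps)
    also have "\<dots> \<le> 2 * pi * (C * X)\<^sup>2 * (3/4)\<^sup>2" using cpos[of j] Xp by (simp add: C_def power2_eq_square)
    also note I_ge
    finally have "pi * (j+1) / 16 * \<Phi> r \<le> I_int p r" .
    then have "pi * (j+1) / 16 \<le> I_int p r / \<Phi> r" using Phip by (simp add: pos_le_divide_eq)
    then show ?thesis using rB unfolding r_def by simp
  qed
  show ?thesis
  proof (intro bexI[OF _ p_class] limsup_infty)
    fix M b :: real assume b: "b < 1"
    obtain j :: nat where j1: "j \<ge> 16 * M / pi" and j2: "j \<ge> 1 / (1 - b)"
      by (metis max.bounded_iff real_arch_simple)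
    define r where "r = 1 - 1 / (4 * real (n j))"
    have n1: "real (n j) \<ge> j + 1" using n_ge2[of j] by linarith
    have "1 / (1 - b) < real (n j)" using j2 n1 by linarith
    then have "1 / real (n j) < 1 - b" using b npos[of j] by (simp add: field_simps)
    moreover have "1 / (4 * real (n j)) \<le> 1 / real (n j)" using n1 by (simp add: field_simps)
    ultimately have rb: "b < r" unfolding r_def by linarith
    have r1: "r < 1" using n1 by (simp add: r_def)
    have "M \<le> pi * (j+1) / 16" using j1 pi_gt3 by (simp add: field_simps)
    also have "\<dots> \<le> I_int p r / \<Phi> r" using key[of j] unfolding r_def by blast
    finally show "\<exists>r. b < r \<and> r < 1 \<and> ereal M \<le> ereal (I_int p r / \<Phi> r)"
      using rb r1 by auto
  qed
qed

theorem theorem1p3: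
  fixes \<Phi> :: "real \<Rightarrow> real"
  assumes pos: "\<And>r. 0 < r \<Longrightarrow> r < 1 \<Longrightarrow> \<Phi> r > 0"
    and small: "\<Phi> \<in> o[at_left 1](\<lambda>r. 1 / (1 - r)\<^sup>2)"
  shows "\<exists>p\<in>carath_class.
           Limsup (at_left 1) (\<lambda>r. ereal (I_int p r / \<Phi> r)) = \<infinity>"
  using main_part[OF pos small] by blast

end
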